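(* Let $G:\mathbb R^2\to\mathbb R^2$ be a linear operator, identified with a real $2\times 2$ matrix. Then $G$ is a grid operator if and only if it is of the form $G=\begin{bmatrix}a+\frac{a'}{\sqrt2}&b+\frac{b'}{\sqrt2}\\ c+\frac{c'}{\sqrt2}&d+\frac{d'}{\sqrt2}\end{bmatrix}$, where $a,b,c,d,a',b',c',d'$ are integers satisfying $a+b+c+d\equiv 0\pmod 2$ and $a'\equiv b'\equiv c'\equiv d'\pmod 2$.
   Context: Let $\omega=e^{i\pi/4}$ and $\mathbb Z[\omega]=\{a_0+a_1\omega+a_2\omega^2+a_3\omega^3 : a_j\in\mathbb Z\}\subseteq\mathbb C$, regarded as a subset of $\mathbb R^2$ via $x+iy\mapsto(x,y)$. A real linear operator $G:\mathbb R^2\to\mathbb R^2$ is a grid operator if $G(\mathbb Z[\omega])\subseteq\mathbb Z[\omega]$. *)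

theory Defs
  imports "HOL-Analysis.Analysis" "HOL-Number_Theory.Cong"
begin

definition omega :: complex where
  "omega = cis (pi / 4)"

definition Zomega :: "complex set" where
  "Zomega = {of_int a0 + of_int a1 * omega + of_int a2 * omega ^ 2 + of_int a3 * omega ^ 3
             | a0 a1 a2 a3 :: int. True}"

definition c2v :: "complex \<Rightarrow> real ^ 2" where
  "c2v z = vector [Re z, Im z]"

definition v2c :: "real ^ 2 \<Rightarrow> complex" where
  "v2c v = Complex (v $ 1) (v $ 2)"

definition grid_operator :: "real ^ 2 ^ 2 \<Rightarrow> bool" where
  "grid_operator G \<longleftrightarrow> (\<forall>z \<in> Zomega. v2c (G *v c2v z) \<in> Zomega)"

end

theory Submission
  imports Defs
begin

lemma sq2_int_aux: "(m::int)^2 = 2 * n^2 \<Longrightarrow> n = 0"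
proof (induction "nat \<bar>n\<bar>" arbitrary: m n rule: less_induct)
  case less
  show ?case
  proof (rule ccontr)
    assume nz: "n \<noteq> 0"
    have "even (m^2)" using less.prems by simp
    then have "even m" by simp
    then obtain k where k: "m = 2*k" by blast
    have "n^2 = 2*k^2" using less.prems k by (simp add: power_mult_distrib)
    then have "even (n^2)" by simp
    then have "even n" by simp
    then obtain j where j: "n = 2*j" by blast
    have "k^2 = 2*j^2" using \<open>n^2 = 2*k^2\<close> j by (simp add: power_mult_distrib)
    moreover have "nat \<bar>j\<bar> < nat \<bar>n\<bar>" using j nz by auto
    ultimately have "j = 0" using less.hyps by blast
    then show False using j nz by simp
  qed
qed

lemma sq2_int: "real_of_int m = of_int n * sqrt 2 \<Longrightarrow> m = 0 \<and> n = 0"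
proof -
  assume h: "real_of_int m = of_int n * sqrt 2"
  then have "(real_of_int m)^2 = (of_int n)^2 * 2" by (simp add: power_mult_distrib)
  then have "m^2 = 2 * n^2" by (metis (mono_tags) mult.commute of_int_eq_iff of_int_mult of_int_numeral of_int_power)
  then have "n = 0" by (rule sq2_int_aux)
  then show ?thesis using h by simp
qed

lemma omega_simps: "Re omega = 1 / sqrt 2" "Im omega = 1 / sqrt 2"
  unfolding omega_def by (simp_all add: cos_45 sin_45 real_div_sqrt)

lemma omega2: "omega ^ 2 = \<i>"
  proof -
  have "omega ^ 2 = cis (pi/4 + pi/4)" unfolding omega_def power2_eq_square cis_mult ..
  also have "pi/4 + pi/4 = pi/2" by simp
  finally show ?thesis by (simp add: complex_eq_iff)
qed

lemma omega3: "omega ^ 3 = omega * \<i>"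
  by (metis omega2 power_Suc numeral_3_eq_3 numeral_2_eq_2 mult.commute)

lemma Zom_char: "z \<in> Zomega \<longleftrightarrow> (\<exists>(p::int) (q::int) (r::int) (s::int). Re z = p + q / sqrt 2 \<and> Im z = r + s / sqrt 2 \<and> [q = s] (mod 2))"
proof
  assume "z \<in> Zomega"
  then obtain a0 a1 a2 a3 :: int where z: "z = of_int a0 + of_int a1 * omega + of_int a2 * omega ^ 2 + of_int a3 * omega ^ 3"
    unfolding Zomega_def by blast
  have "Re z = a0 + (a1 - a3) / sqrt 2" "Im z = a2 + (a1 + a3) / sqrt 2"
    unfolding z omega2 omega3 by (simp_all add: omega_simps diff_divide_distrib add_divide_distrib)
  moreover have "[a1 - a3 = a1 + a3] (mod 2)" unfolding cong_def by presburger
  ultimately show "\<exists>(p::int) (q::int) (r::int) (s::int). Re z = p + q / sqrt 2 \<and> Im z = r + s / sqrt 2 \<and> [q = s] (mod 2)"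
    by (metis of_int_add of_int_diff)
next
  assume "\<exists>(p::int) (q::int) (r::int) (s::int). Re z = p + q / sqrt 2 \<and> Im z = r + s / sqrt 2 \<and> [q = s] (mod 2)"
  then obtain p q r s :: int where h: "Re z = p + q / sqrt 2" "Im z = r + s / sqrt 2" "[q = s] (mod 2)" by blast
  obtain t where t: "q + s = 2 * t" proof -
    have "even (q + s)" using h(3) unfolding cong_def by presburger
    then show ?thesis using that by blast
  qed
  define a1 where "a1 = t"
  define a3 where "a3 = s - t"
  have q: "q = a1 - a3" and s: "s = a1 + a3" using t unfolding a1_def a3_def by auto
  have "z = of_int p + of_int a1 * omega + of_int r * omega ^ 2 + of_int a3 * omega ^ 3"
    apply (rule complex_eqI)
    unfolding omega2 omega3 using h(1,2) q s
    by (simp_all add: omega_simps diff_divide_distrib add_divide_distrib)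
  then show "z \<in> Zomega" unfolding Zomega_def by blast
qed

lemma app: "Re (v2c (G *v c2v z)) = G$1$1 * Re z + G$1$2 * Im z"
           "Im (v2c (G *v c2v z)) = G$2$1 * Re z + G$2$2 * Im z"
  unfolding v2c_def c2v_def matrix_vector_mult_def
  by (simp_all add: UNIV_2)


lemma in_Z_1: "1 \<in> Zomega" and in_Z_i: "\<i> \<in> Zomega" and in_Z_om: "omega \<in> Zomega"
  unfolding Zom_char
    apply (rule exI[of _ 1], rule exI[of _ 0], rule exI[of _ 0], rule exI[of _ 0], simp)
   apply (rule exI[of _ 0], rule exI[of _ 0], rule exI[of _ 1], rule exI[of _ 0], simp)
  apply (rule exI[of _ 0], rule exI[of _ 1], rule exI[of _ 0], rule exI[of _ 1], simp add: omega_simps)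
  done

lemma cong2: "[x = y] (mod 2) \<longleftrightarrow> (x::int) mod 2 = y mod 2" by (simp add: cong_def)

lemma sq2_split:
  assumes "real_of_int u / 2 + of_int v / sqrt 2 = of_int p + of_int q / sqrt 2"
  shows "u = 2 * p \<and> v = q"
proof -
  have s: "sqrt 2 * sqrt 2 = 2" by simp
  have "real_of_int (u - 2*p) = of_int (q - v) * sqrt 2"
  proof -
    have "of_int u + of_int v * sqrt 2 = 2 * of_int p + of_int q * sqrt 2"
    proof -
      have e: "x / sqrt 2 = x * sqrt 2 / 2" for x :: real
        by (simp add: field_simps)
      show ?thesis using assms unfolding e by (simp add: field_simps)
    qed
    then show ?thesis by (simp add: algebra_simps)
  qed
  from sq2_int[OF this] show ?thesis by simp
qed

theorem lemma5p31:
  fixes G :: "real ^ 2 ^ 2"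
  shows "grid_operator G \<longleftrightarrow>
    (\<exists>a b c d a' b' c' d' :: int.
        G $ 1 $ 1 = of_int a + of_int a' / sqrt 2 \<and>
        G $ 1 $ 2 = of_int b + of_int b' / sqrt 2 \<and>
        G $ 2 $ 1 = of_int c + of_int c' / sqrt 2 \<and>
        G $ 2 $ 2 = of_int d + of_int d' / sqrt 2 \<and>
        [a + b + c + d = 0] (mod 2) \<and>
        [a' = b'] (mod 2) \<and> [b' = c'] (mod 2) \<and> [c' = d'] (mod 2))"
proof
  assume g: "grid_operator G"
  have "v2c (G *v c2v 1) \<in> Zomega" using g in_Z_1 unfolding grid_operator_def by blast
  then obtain a a' c c' :: int where h1: "G$1$1 = a + a'/sqrt 2" "G$2$1 = c + c'/sqrt 2" "[a' = c'] (mod 2)"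
    unfolding Zom_char app by auto
  have "v2c (G *v c2v \<i>) \<in> Zomega" using g in_Z_i unfolding grid_operator_def by blast
  then obtain b b' d d' :: int where h2: "G$1$2 = b + b'/sqrt 2" "G$2$2 = d + d'/sqrt 2" "[b' = d'] (mod 2)"
    unfolding Zom_char app by auto
  have "v2c (G *v c2v omega) \<in> Zomega" using g in_Z_om unfolding grid_operator_def by blast
  then obtain p q r s :: int where h3: "(G$1$1 + G$1$2) / sqrt 2 = p + q/sqrt 2"
     "(G$2$1 + G$2$2) / sqrt 2 = r + s/sqrt 2" "[q = s] (mod 2)"
    unfolding Zom_char app omega_simps by (auto simp: field_simps)
  have s2: "sqrt 2 * sqrt 2 = 2" by simp
  have "real_of_int (a' + b') / 2 + of_int (a + b) / sqrt 2 = of_int p + of_int q / sqrt 2"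
    using h3(1) unfolding h1 h2 by (simp add: field_simps)
  from sq2_split[OF this] have e1: "a' + b' = 2 * p" "a + b = q" by auto
  have "real_of_int (c' + d') / 2 + of_int (c + d) / sqrt 2 = of_int r + of_int s / sqrt 2"
    using h3(2) unfolding h1 h2 by (simp add: field_simps)
  from sq2_split[OF this] have e2: "c' + d' = 2 * r" "c + d = s" by auto
  have "[a + b + c + d = 0] (mod 2) \<and> [a' = b'] (mod 2) \<and> [b' = c'] (mod 2) \<and> [c' = d'] (mod 2)"
    using h1(3) h2(3) h3(3) e1 e2 unfolding cong2 by presburger
  then show "\<exists>a b c d a' b' c' d' :: int.
        G $ 1 $ 1 = of_int a + of_int a' / sqrt 2 \<and>
        G $ 1 $ 2 = of_int b + of_int b' / sqrt 2 \<and>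
        G $ 2 $ 1 = of_int c + of_int c' / sqrt 2 \<and>
        G $ 2 $ 2 = of_int d + of_int d' / sqrt 2 \<and>
        [a + b + c + d = 0] (mod 2) \<and>
        [a' = b'] (mod 2) \<and> [b' = c'] (mod 2) \<and> [c' = d'] (mod 2)"
    using h1 h2 by blast
next
  assume "\<exists>a b c d a' b' c' d' :: int.
        G $ 1 $ 1 = of_int a + of_int a' / sqrt 2 \<and>
        G $ 1 $ 2 = of_int b + of_int b' / sqrt 2 \<and>
        G $ 2 $ 1 = of_int c + of_int c' / sqrt 2 \<and>
        G $ 2 $ 2 = of_int d + of_int d' / sqrt 2 \<and>
        [a + b + c + d = 0] (mod 2) \<and>
        [a' = b'] (mod 2) \<and> [b' = c'] (mod 2) \<and> [c' = d'] (mod 2)"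
  then obtain a b c d aa bb cc dd :: int where G:
    "G $ 1 $ 1 = of_int a + of_int aa / sqrt 2"
    "G $ 1 $ 2 = of_int b + of_int bb / sqrt 2"
    "G $ 2 $ 1 = of_int c + of_int cc / sqrt 2"
    "G $ 2 $ 2 = of_int d + of_int dd / sqrt 2"
    and C: "[a + b + c + d = 0] (mod 2)" "[aa = bb] (mod 2)" "[bb = cc] (mod 2)" "[cc = dd] (mod 2)"
    by blast
  show "grid_operator G"
    unfolding grid_operator_def
  proof
    fix z assume "z \<in> Zomega"
    then obtain p q r s :: int where z: "Re z = p + q/sqrt 2" "Im z = r + s/sqrt 2" "[q = s] (mod 2)"
      unfolding Zom_char by blast
    have "even (aa * q + bb * s)" "even (cc * q + dd * s)"
    proof -
      have d1: "2 dvd q + s" "2 dvd bb - aa" "2 dvd dd - cc"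
        using C z(3) unfolding cong2 by presburger+
      have "aa * q + bb * s = aa * (q + s) + (bb - aa) * s" "cc * q + dd * s = cc * (q + s) + (dd - cc) * s"
        by (simp_all add: algebra_simps)
      then show "even (aa * q + bb * s)" "even (cc * q + dd * s)" using d1 by simp_all
    qed
    then obtain k l where kl: "aa * q + bb * s = 2 * k" "cc * q + dd * s = 2 * l" by blast
    define P where "P = a * p + b * r + k"
    define Q where "Q = a * q + aa * p + b * s + bb * r"
    define R where "R = c * p + d * r + l"
    define S where "S = c * q + cc * p + d * s + dd * r"
    have s2: "sqrt 2 * sqrt 2 = 2" by simp
    have k': "real_of_int aa * of_int q + of_int bb * of_int s = 2 * of_int k"
      using kl(1) by (metis of_int_add of_int_mult of_int_numeral)
    have l': "real_of_int cc * of_int q + of_int dd * of_int s = 2 * of_int l"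
      using kl(2) by (metis of_int_add of_int_mult of_int_numeral)
    have k'': "(real_of_int aa * of_int q + of_int bb * of_int s) / 2 = of_int k" using k' by simp
    have l'': "(real_of_int cc * of_int q + of_int dd * of_int s) / 2 = of_int l" using l' by simp
    have "G$1$1 * Re z + G$1$2 * Im z = P + Q / sqrt 2"
    proof -
      have "G$1$1 * Re z + G$1$2 * Im z = a * p + b * r + (aa * q + bb * s) / (sqrt 2 * sqrt 2) + (a * q + aa * p + b * s + bb * r)/sqrt 2"
        unfolding G z by (simp add: field_simps)
      also have "\<dots> = P + Q / sqrt 2" unfolding s2 kl(1) P_def Q_def by simp
      finally show ?thesis .
    qed
    moreover have "G$2$1 * Re z + G$2$2 * Im z = R + S / sqrt 2"
    proof -
      have "G$2$1 * Re z + G$2$2 * Im z = c * p + d * r + (cc * q + dd * s) / (sqrt 2 * sqrt 2) + (c * q + cc * p + d * s + dd * r)/sqrt 2"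
        unfolding G z by (simp add: field_simps)
      also have "\<dots> = R + S / sqrt 2" unfolding s2 kl(2) R_def S_def by simp
      finally show ?thesis .
    qed
    moreover have "[Q = S] (mod 2)"
    proof -
      have d1: "2 dvd a + b - c - d" "2 dvd s - q" "2 dvd aa - cc" "2 dvd bb - dd"
        using C z(3) unfolding cong2 by presburger+
      have "S - Q = (c + d - a - b) * q + (d - b) * (s - q) + (cc - aa) * p + (dd - bb) * r"
        unfolding Q_def S_def by (simp add: algebra_simps)
      moreover have "2 dvd (c + d - a - b) * q + (d - b) * (s - q) + (cc - aa) * p + (dd - bb) * r"
        using d1 by (metis dvd_add dvd_mult2 dvd_mult dvd_minus_iff minus_diff_eq diff_diff_eq)
      ultimately have "[S = Q] (mod 2)" unfolding cong_iff_dvd_diff by simp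
      then show ?thesis by (rule cong_sym)
    qed
    ultimately show "v2c (G *v c2v z) \<in> Zomega"
      unfolding Zom_char app by blast
  qed
qed

end
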